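(* Let $A$ be an $n\times n$ matrix with a designated set of large positions, and let $(X,Y)$ be a $q$-good restriction. Let $X_1,X_2\subseteq X$ and $Y_1,Y_2\subseteq Y$ with $|Y_1|=|X_1|$, $|Y_2|=|X_2|$. Suppose that $(X_1,Y_1)$ has a $p_1$-strong line and $(X_2,Y_2)$ has a $p_2$-strong line, where $(1-p_1)|X_1|>1$, $(1-p_2)|X_2|>1$ and \[(1-p_1)(1-p_2)\frac{|X_1||X_2|}{|X|^2}\ge 4q.\] Then these two strong lines are the same line of $A$: either both are row $i$ for the same $i$, or both are column $j$ for the same $j$.
   Context: Let $A=(a_{ij})_{i,j\in[n]}$ with a designated set $L\subseteq[n]\times[n]$ of large positions. A restriction is $(X,Y)$ with $X,Y\subseteq[n]$, $|X|=|Y|$; a generalized diagonal of $A[X,Y]$ is $\{(i,\sigma(i)):i\in X\}$ for a bijection $\sigma:X\to Y$, random meaning uniform $\sigma$; it is good if it contains exactly one large position; $(X,Y)$ is $q$-good if a random generalized diagonal is good with probability $\ge1-q$. For $i\in X$, row $i$ is $p$-strong for $(X,Y)$ if at least $(1-p)|Y|$ of the positions $\{(i,j):j\in Y\}$ are large; for $j\in Y$, column $j$ is $p$-strong for $(X,Y)$ if at least $(1-p)|X|$ of $\{(i,j):i\in X\}$ are large. $(X,Y)$ has a $p$-strong line if some row or column is $p$-strong for it. *)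

theory Defs
  imports Complex_Main "HOL-Library.FuncSet"
begin

text \<open>Positions of the matrix are pairs (i,j) with i,j in {..<n}; only the set L of
large positions matters for the notions below (the entries of A are irrelevant).\<close>

definition restriction :: "nat \<Rightarrow> nat set \<Rightarrow> nat set \<Rightarrow> bool" where
  "restriction n X Y \<longleftrightarrow> X \<subseteq> {..<n} \<and> Y \<subseteq> {..<n} \<and> card X = card Y"

text \<open>Generalized diagonals of A[X,Y] correspond to bijections X \<rightarrow> Y (extensional).\<close>
definition gen_diags :: "nat set \<Rightarrow> nat set \<Rightarrow> (nat \<Rightarrow> nat) set" where
  "gen_diags X Y = {\<sigma> \<in> extensional X. bij_betw \<sigma> X Y}"

definition good_diag :: "(nat \<times> nat) set \<Rightarrow> nat set \<Rightarrow> (nat \<Rightarrow> nat) \<Rightarrow> bool" where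
  "good_diag L X \<sigma> \<longleftrightarrow> card {i \<in> X. (i, \<sigma> i) \<in> L} = 1"

definition prob_good :: "(nat \<times> nat) set \<Rightarrow> nat set \<Rightarrow> nat set \<Rightarrow> real" where
  "prob_good L X Y = real (card {\<sigma> \<in> gen_diags X Y. good_diag L X \<sigma>}) / real (card (gen_diags X Y))"

definition q_good :: "(nat \<times> nat) set \<Rightarrow> real \<Rightarrow> nat set \<Rightarrow> nat set \<Rightarrow> bool" where
  "q_good L q X Y \<longleftrightarrow> prob_good L X Y \<ge> 1 - q"

datatype line = Row nat | Col nat

fun strong_line :: "(nat \<times> nat) set \<Rightarrow> real \<Rightarrow> nat set \<Rightarrow> nat set \<Rightarrow> line \<Rightarrow> bool" where
  "strong_line L p X Y (Row i) \<longleftrightarrow>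
     i \<in> X \<and> real (card {j \<in> Y. (i, j) \<in> L}) \<ge> (1 - p) * real (card Y)"
| "strong_line L p X Y (Col j) \<longleftrightarrow>
     j \<in> Y \<and> real (card {i \<in> X. (i, j) \<in> L}) \<ge> (1 - p) * real (card X)"

end

theory Submission
  imports Defs
begin


lemma gen_diags_sub: "gen_diags X Y \<subseteq> PiE X (\<lambda>_. Y)"
  unfolding gen_diags_def by (auto simp: PiE_def bij_betw_def)

lemma finite_gen_diags: "finite X \<Longrightarrow> finite Y \<Longrightarrow> finite (gen_diags X Y)"
  by (rule finite_subset[OF gen_diags_sub]) (simp add: finite_PiE)

lemma gd_fix:
  assumes "a \<in> X" "b \<in> Y"
  shows "bij_betw (\<lambda>\<sigma>. restrict \<sigma> (X-{a})) {\<sigma>\<in>gen_diags X Y. \<sigma> a = b} (gen_diags (X-{a}) (Y-{b}))"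
proof (rule bij_betw_byWitness[where f' = "\<lambda>\<tau>. \<tau>(a:=b)"])
  show "\<forall>\<sigma>\<in>{\<sigma>\<in>gen_diags X Y. \<sigma> a = b}. (restrict \<sigma> (X-{a}))(a:=b) = \<sigma>"
    using assms by (auto simp: gen_diags_def extensional_def fun_eq_iff)
  show "\<forall>\<tau>\<in>gen_diags (X-{a}) (Y-{b}). restrict (\<tau>(a:=b)) (X-{a}) = \<tau>"
    using assms by (auto simp: gen_diags_def extensional_def fun_eq_iff)
  show "(\<lambda>\<sigma>. restrict \<sigma> (X-{a})) ` {\<sigma>\<in>gen_diags X Y. \<sigma> a = b} \<subseteq> gen_diags (X-{a}) (Y-{b})"
  proof safe
    fix \<sigma> assume s: "\<sigma> \<in> gen_diags X Y" "b = \<sigma> a"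
    then have bj: "bij_betw \<sigma> X Y" by (simp add: gen_diags_def)
    have "bij_betw \<sigma> (X-{a}) (Y-{\<sigma> a})"
      using bj assms(1) by (metis bij_betw_DiffI bij_betw_singletonI empty_subsetI insert_subset bij_betw_apply)
    then have "bij_betw (restrict \<sigma> (X-{a})) (X-{a}) (Y-{\<sigma> a})"
      by (metis bij_betw_cong restrict_apply')
    then show "restrict \<sigma> (X-{a}) \<in> gen_diags (X-{a}) (Y-{\<sigma> a})"
      by (simp add: gen_diags_def)
  qed
  show "(\<lambda>\<tau>. \<tau>(a:=b)) ` gen_diags (X-{a}) (Y-{b}) \<subseteq> {\<sigma>\<in>gen_diags X Y. \<sigma> a = b}"
  proof safe
    fix \<tau> assume t: "\<tau> \<in> gen_diags (X-{a}) (Y-{b})"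
    then have bj: "bij_betw \<tau> (X-{a}) (Y-{b})" and ex: "\<tau> \<in> extensional (X-{a})" by (auto simp: gen_diags_def)
    have "bij_betw (\<tau>(a:=b)) (X-{a}) (Y-{b})"
      using bj by (rule bij_betw_cong[THEN iffD1, rotated]) auto
    moreover have "bij_betw (\<tau>(a:=b)) {a} {b}" by simp
    ultimately have "bij_betw (\<tau>(a:=b)) ((X-{a}) \<union> {a}) ((Y-{b}) \<union> {b})"
      by (rule bij_betw_combine) auto
    moreover have "(X-{a}) \<union> {a} = X" "(Y-{b}) \<union> {b} = Y" using assms by auto
    ultimately have "bij_betw (\<tau>(a:=b)) X Y" by simp
    moreover have "\<tau>(a:=b) \<in> extensional X" using ex assms by (auto simp: extensional_def)
    ultimately show "\<tau>(a:=b) \<in> gen_diags X Y" by (simp add: gen_diags_def)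
  qed simp
qed

lemma card_gd_fix:
  assumes "a \<in> X" "b \<in> Y"
  shows "card {\<sigma>\<in>gen_diags X Y. \<sigma> a = b} = card (gen_diags (X-{a}) (Y-{b}))"
  using bij_betw_same_card[OF gd_fix[OF assms]] .

lemma card_gen_diags:
  "finite X \<Longrightarrow> finite Y \<Longrightarrow> card Y = card X \<Longrightarrow> card (gen_diags X Y) = fact (card X)"
proof (induction "card X" arbitrary: X Y)
  case 0
  then have "X = {}" "Y = {}" by (auto simp: card_eq_0_iff)
  then have "gen_diags X Y = {\<lambda>_. undefined}" unfolding gen_diags_def by (simp add: extensional_empty bij_betw_def)
  then show ?case using \<open>X = {}\<close> by simp
next
  case (Suc k)
  then obtain a where a: "a \<in> X" by (metis card.empty empty_iff ex_in_conv nat.distinct(1))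
  have fY: "finite Y" using Suc by simp
  have G: "gen_diags X Y = (\<Union>b\<in>Y. {\<sigma>\<in>gen_diags X Y. \<sigma> a = b})"
    using a by (auto simp: gen_diags_def bij_betw_def)
  have "card (gen_diags X Y) = (\<Sum>b\<in>Y. card {\<sigma>\<in>gen_diags X Y. \<sigma> a = b})"
    apply (subst G)
    apply (rule card_UN_disjoint)
    using fY finite_gen_diags[OF Suc(3) fY] by auto
  also have "\<dots> = (\<Sum>b\<in>Y. fact k)"
  proof (rule sum.cong)
    fix b assume b: "b \<in> Y"
    have "card {\<sigma>\<in>gen_diags X Y. \<sigma> a = b} = card (gen_diags (X-{a}) (Y-{b}))"
      by (rule card_gd_fix[OF a b])
    also have "\<dots> = fact (card (X-{a}))"
      apply (rule Suc(1))
      using Suc(2,3,4,5) a b fY by auto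
    also have "card (X-{a}) = k" using Suc(2,3) a by auto
    finally show "card {\<sigma>\<in>gen_diags X Y. \<sigma> a = b} = fact k" .
  qed simp
  also have "\<dots> = fact (card X)" using Suc(2,5) by (metis fact_Suc of_nat_id sum_constant)
  finally show ?case .
qed

lemma card_gd_fix2:
  assumes fin: "finite X" "finite Y" "card Y = card X"
    and a: "a1 \<in> X" "a2 \<in> X" "a1 \<noteq> a2" and b: "b1 \<in> Y" "b2 \<in> Y" "b1 \<noteq> b2"
  shows "card {\<sigma>\<in>gen_diags X Y. \<sigma> a1 = b1 \<and> \<sigma> a2 = b2} = fact (card X - 2)"
proof -
  let ?f = "\<lambda>\<sigma>. restrict \<sigma> (X-{a1})"
  have bj: "bij_betw ?f {\<sigma>\<in>gen_diags X Y. \<sigma> a1 = b1} (gen_diags (X-{a1}) (Y-{b1}))"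
    by (rule gd_fix[OF a(1) b(1)])
  have "bij_betw ?f {\<sigma>\<in>gen_diags X Y. \<sigma> a1 = b1 \<and> \<sigma> a2 = b2} {\<tau>\<in>gen_diags (X-{a1}) (Y-{b1}). \<tau> a2 = b2}"
  proof (rule bij_betw_subset[OF bj])
    show "{\<sigma>\<in>gen_diags X Y. \<sigma> a1 = b1 \<and> \<sigma> a2 = b2} \<subseteq> {\<sigma>\<in>gen_diags X Y. \<sigma> a1 = b1}" by blast
    show "?f ` {\<sigma>\<in>gen_diags X Y. \<sigma> a1 = b1 \<and> \<sigma> a2 = b2} = {\<tau>\<in>gen_diags (X-{a1}) (Y-{b1}). \<tau> a2 = b2}"
    proof
      show "?f ` {\<sigma>\<in>gen_diags X Y. \<sigma> a1 = b1 \<and> \<sigma> a2 = b2} \<subseteq> {\<tau>\<in>gen_diags (X-{a1}) (Y-{b1}). \<tau> a2 = b2}"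
        using bj a unfolding bij_betw_def by auto
      show "{\<tau>\<in>gen_diags (X-{a1}) (Y-{b1}). \<tau> a2 = b2} \<subseteq> ?f ` {\<sigma>\<in>gen_diags X Y. \<sigma> a1 = b1 \<and> \<sigma> a2 = b2}"
      proof
        fix \<tau> assume t: "\<tau> \<in> {\<tau>\<in>gen_diags (X-{a1}) (Y-{b1}). \<tau> a2 = b2}"
        then obtain \<sigma> where s: "\<sigma> \<in> {\<sigma>\<in>gen_diags X Y. \<sigma> a1 = b1}" "\<tau> = ?f \<sigma>"
          using bj unfolding bij_betw_def by (metis (no_types, lifting) imageE mem_Collect_eq)
        then have "\<sigma> a2 = b2" using t a by auto
        then show "\<tau> \<in> ?f ` {\<sigma>\<in>gen_diags X Y. \<sigma> a1 = b1 \<and> \<sigma> a2 = b2}" using s by blast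
      qed
    qed
  qed
  then have "card {\<sigma>\<in>gen_diags X Y. \<sigma> a1 = b1 \<and> \<sigma> a2 = b2} = card {\<tau>\<in>gen_diags (X-{a1}) (Y-{b1}). \<tau> a2 = b2}"
    by (rule bij_betw_same_card)
  also have "\<dots> = card (gen_diags (X-{a1}-{a2}) (Y-{b1}-{b2}))"
    by (rule card_gd_fix) (use a b in auto)
  also have "\<dots> = fact (card (X-{a1}-{a2}))"
    by (rule card_gen_diags) (use fin a b in auto)
  also have "card (X-{a1}-{a2}) = card X - 2" using a fin by auto
  finally show ?thesis .
qed

definition Dset :: "nat set \<Rightarrow> nat set \<Rightarrow> (nat \<times> nat) \<times> (nat \<times> nat) \<Rightarrow> (nat \<Rightarrow> nat) set" where
  "Dset X Y c = {\<sigma>\<in>gen_diags X Y. \<sigma> (fst (fst c)) = snd (fst c) \<and> \<sigma> (fst (snd c)) = snd (snd c)}"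

lemma prob_bound:
  assumes fin: "finite X" "finite Y" "card Y = card X" and m2: "card X \<ge> 2"
    and fQ: "finite Q"
    and hQ: "\<And>c. c \<in> Q \<Longrightarrow> fst (fst c) \<in> X \<and> fst (snd c) \<in> X \<and> snd (fst c) \<in> Y \<and> snd (snd c) \<in> Y
              \<and> fst (fst c) \<noteq> fst (snd c) \<and> snd (fst c) \<noteq> snd (snd c) \<and> fst c \<in> L \<and> snd c \<in> L"
    and disj: "\<And>c c' \<sigma>. c \<in> Q \<Longrightarrow> c' \<in> Q \<Longrightarrow> c \<noteq> c' \<Longrightarrow> \<sigma> \<in> Dset X Y c \<Longrightarrow> \<sigma> \<notin> Dset X Y c'"
  shows "prob_good L X Y \<le> 1 - real (card Q) / (real (card X) * (real (card X) - 1))"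
proof -
  define m where "m = card X"
  define G where "G = gen_diags X Y"
  define U where "U = (\<Union>c\<in>Q. Dset X Y c)"
  have fG: "finite G" unfolding G_def using finite_gen_diags fin by blast
  have cG: "card G = fact m" unfolding G_def m_def using card_gen_diags fin by blast
  have UG: "U \<subseteq> G" unfolding U_def G_def Dset_def by auto
  have cD: "card (Dset X Y c) = fact (m - 2)" if "c \<in> Q" for c
    unfolding Dset_def m_def using hQ[OF that] card_gd_fix2[OF fin] by auto
  have cU: "card U = card Q * fact (m - 2)"
  proof -
    have "card U = (\<Sum>c\<in>Q. card (Dset X Y c))"
      unfolding U_def
    proof (rule card_UN_disjoint[OF fQ])
      show "\<forall>c\<in>Q. finite (Dset X Y c)"
        using fG unfolding G_def Dset_def by auto
      show "\<forall>c\<in>Q. \<forall>c'\<in>Q. c \<noteq> c' \<longrightarrow> Dset X Y c \<inter> Dset X Y c' = {}"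
        using disj by blast
    qed
    also have "\<dots> = (\<Sum>c\<in>Q. fact (m - 2))" by (rule sum.cong) (auto simp: cD)
    finally show ?thesis by simp
  qed
  have gsub: "{\<sigma>\<in>G. good_diag L X \<sigma>} \<subseteq> G - U"
  proof safe
    fix \<sigma> assume g: "\<sigma> \<in> G" "good_diag L X \<sigma>" "\<sigma> \<in> U"
    then obtain c where c: "c \<in> Q" "\<sigma> \<in> Dset X Y c" unfolding U_def by auto
    have "{fst (fst c), fst (snd c)} \<subseteq> {i \<in> X. (i, \<sigma> i) \<in> L}"
      using c hQ[OF c(1)] unfolding Dset_def by (auto simp: prod_eq_iff)
    then have "card {fst (fst c), fst (snd c)} \<le> card {i \<in> X. (i, \<sigma> i) \<in> L}"
      by (rule card_mono[rotated]) (use fin in auto)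
    then show False using g(2) hQ[OF c(1)] unfolding good_diag_def by auto
  qed
  have "card {\<sigma>\<in>G. good_diag L X \<sigma>} \<le> card (G - U)"
    by (rule card_mono) (use fG gsub in auto)
  also have "\<dots> = card G - card U" using card_Diff_subset[OF finite_subset[OF UG fG] UG] .
  finally have cg: "real (card {\<sigma>\<in>G. good_diag L X \<sigma>}) \<le> real (fact m) - real (card Q * fact (m - 2))"
    using cG cU card_mono[OF fG UG] by linarith
  have fm: "real (fact m) = real m * (real m - 1) * real (fact (m - 2))"
  proof -
    obtain k where k: "m = Suc (Suc k)" using m2 unfolding m_def by (metis add_2_eq_Suc le_Suc_ex)
    show ?thesis unfolding k by (simp add: algebra_simps)
  qed
  have pos: "real (fact (m - 2)) > 0" "real m * (real m - 1) > 0" using m2 unfolding m_def by auto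
  have "prob_good L X Y = real (card {\<sigma>\<in>G. good_diag L X \<sigma>}) / real (fact m)"
    unfolding prob_good_def G_def[symmetric] cG ..
  also have "\<dots> \<le> (real (fact m) - real (card Q * fact (m - 2))) / real (fact m)"
    by (rule divide_right_mono[OF cg]) simp
  also have "\<dots> = 1 - real (card Q) / (real m * (real m - 1))"
  proof -
    have e: "(M * F - Q * F) / (M * F) = 1 - Q / M" if "F > 0" "M > 0" for M F Q :: real
      using that by (simp add: field_simps)
    show ?thesis unfolding fm of_nat_mult using e[OF pos(1) pos(2)] by simp
  qed
  finally show ?thesis unfolding m_def .
qed

lemma offdiag_card:
  assumes "finite S1" "finite S2"
  shows "card S1 * card S2 \<le> card (S1 \<times> S2 - Id) + card S1"
proof -
  have "card (S1 \<times> S2) \<le> card ((S1 \<times> S2 - Id) \<union> ((\<lambda>x. (x,x)) ` S1))"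
    by (rule card_mono) (use assms in auto)
  also have "\<dots> \<le> card (S1 \<times> S2 - Id) + card ((\<lambda>x. (x,x)) ` S1)" by (rule card_Un_le)
  also have "card ((\<lambda>x. (x,x)) ` S1) \<le> card S1" by (rule card_image_le) (use assms in auto)
  finally show ?thesis by (simp add: card_cartesian_product)
qed

lemma rowrow_bad:
  assumes fin: "finite X" "finite Y" "card Y = card X"
    and i: "i1 \<in> X" "i2 \<in> X" "i1 \<noteq> i2"
    and S: "S1 \<subseteq> Y" "S2 \<subseteq> Y" "\<And>b. b \<in> S1 \<Longrightarrow> (i1, b) \<in> L" "\<And>b. b \<in> S2 \<Longrightarrow> (i2, b) \<in> L"
  shows "prob_good L X Y \<le> 1 - (real (card S1) * real (card S2) - real (card S1)) / (real (card X) * (real (card X) - 1))"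
proof -
  define Q where "Q = (\<lambda>(b1,b2). ((i1,b1),(i2,b2))) ` (S1 \<times> S2 - Id)"
  have fS: "finite S1" "finite S2" using S(1,2) fin(2) finite_subset by blast+
  have m2: "card X \<ge> 2"
  proof -
    have "card {i1, i2} \<le> card X" by (rule card_mono) (use fin i in auto)
    then show ?thesis using i by simp
  qed
  have cQ: "card Q = card (S1 \<times> S2 - Id)" unfolding Q_def
    by (rule card_image) (auto simp: inj_on_def)
  have "prob_good L X Y \<le> 1 - real (card Q) / (real (card X) * (real (card X) - 1))"
  proof (rule prob_bound[OF fin m2])
    show "finite Q" unfolding Q_def using fS by auto
    fix c assume "c \<in> Q"
    then show "fst (fst c) \<in> X \<and> fst (snd c) \<in> X \<and> snd (fst c) \<in> Y \<and> snd (snd c) \<in> Y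
              \<and> fst (fst c) \<noteq> fst (snd c) \<and> snd (fst c) \<noteq> snd (snd c) \<and> fst c \<in> L \<and> snd c \<in> L"
      unfolding Q_def using i S by auto
  next
    fix c c' \<sigma> assume "c \<in> Q" "c' \<in> Q" "c \<noteq> c'" "\<sigma> \<in> Dset X Y c"
    then show "\<sigma> \<notin> Dset X Y c'" unfolding Q_def Dset_def by auto
  qed
  moreover have "real (card S1) * real (card S2) - real (card S1) \<le> real (card Q)"
    using offdiag_card[OF fS] cQ
    by (metis of_nat_add of_nat_le_iff of_nat_mult diff_le_eq)
  moreover have "real (card X) * (real (card X) - 1) > 0" using m2 by simp
  ultimately show ?thesis by (smt (verit) divide_right_mono)
qed

lemma colcol_bad:
  assumes fin: "finite X" "finite Y" "card Y = card X"
    and j: "j1 \<in> Y" "j2 \<in> Y" "j1 \<noteq> j2"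
    and T: "T1 \<subseteq> X" "T2 \<subseteq> X" "\<And>a. a \<in> T1 \<Longrightarrow> (a, j1) \<in> L" "\<And>a. a \<in> T2 \<Longrightarrow> (a, j2) \<in> L"
  shows "prob_good L X Y \<le> 1 - (real (card T1) * real (card T2) - real (card T1)) / (real (card X) * (real (card X) - 1))"
proof -
  define Q where "Q = (\<lambda>(a1,a2). ((a1,j1),(a2,j2))) ` (T1 \<times> T2 - Id)"
  have fS: "finite T1" "finite T2" using T(1,2) fin(1) finite_subset by blast+
  have m2: "card X \<ge> 2"
  proof -
    have "card {j1, j2} \<le> card Y" by (rule card_mono) (use fin j in auto)
    then show ?thesis using j fin by simp
  qed
  have cQ: "card Q = card (T1 \<times> T2 - Id)" unfolding Q_def
    by (rule card_image) (auto simp: inj_on_def)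
  have "prob_good L X Y \<le> 1 - real (card Q) / (real (card X) * (real (card X) - 1))"
  proof (rule prob_bound[OF fin m2])
    show "finite Q" unfolding Q_def using fS by auto
    fix c assume "c \<in> Q"
    then show "fst (fst c) \<in> X \<and> fst (snd c) \<in> X \<and> snd (fst c) \<in> Y \<and> snd (snd c) \<in> Y
              \<and> fst (fst c) \<noteq> fst (snd c) \<and> snd (fst c) \<noteq> snd (snd c) \<and> fst c \<in> L \<and> snd c \<in> L"
      unfolding Q_def using j T by auto
  next
    fix c c' \<sigma> assume a: "c \<in> Q" "c' \<in> Q" "c \<noteq> c'" "\<sigma> \<in> Dset X Y c"
    show "\<sigma> \<notin> Dset X Y c'"
    proof
      assume b: "\<sigma> \<in> Dset X Y c'"
      have inj: "inj_on \<sigma> X" using a(4) unfolding Dset_def gen_diags_def bij_betw_def by auto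
      from a b show False unfolding Q_def Dset_def using T inj
        by (auto simp: inj_on_def) blast+
    qed
  qed
  moreover have "real (card T1) * real (card T2) - real (card T1) \<le> real (card Q)"
    using offdiag_card[OF fS] cQ
    by (metis of_nat_add of_nat_le_iff of_nat_mult diff_le_eq)
  moreover have "real (card X) * (real (card X) - 1) > 0" using m2 by simp
  ultimately show ?thesis by (smt (verit) divide_right_mono)
qed

lemma rowcol_bad:
  assumes fin: "finite X" "finite Y" "card Y = card X"
    and ij: "i \<in> X" "j \<in> Y"
    and S: "S \<subseteq> Y" "\<And>b. b \<in> S \<Longrightarrow> (i, b) \<in> L"
    and T: "T \<subseteq> X" "\<And>a. a \<in> T \<Longrightarrow> (a, j) \<in> L"
    and S2: "card S \<ge> 2" and T2: "card T \<ge> 2"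
  shows "prob_good L X Y \<le> 1 - ((real (card S) - 1) * (real (card T) - 1)) / (real (card X) * (real (card X) - 1))"
proof -
  define Q where "Q = (\<lambda>(b,a). ((i,b),(a,j))) ` ((S - {j}) \<times> (T - {i}))"
  have fS: "finite S" "finite T" using S(1) T(1) fin(1,2) finite_subset by blast+
  have m2: "card X \<ge> 2" using card_mono[OF fin(1) T(1)] T2 by simp
  have cQ: "card Q = card (S - {j}) * card (T - {i})" unfolding Q_def
    by (subst card_image) (auto simp: inj_on_def card_cartesian_product)
  have PB: "prob_good L X Y \<le> 1 - real (card Q) / (real (card X) * (real (card X) - 1))"
  proof (rule prob_bound[OF fin m2])
    show "finite Q" unfolding Q_def using fS by auto
    fix c assume "c \<in> Q"
    then show "fst (fst c) \<in> X \<and> fst (snd c) \<in> X \<and> snd (fst c) \<in> Y \<and> snd (snd c) \<in> Y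
              \<and> fst (fst c) \<noteq> fst (snd c) \<and> snd (fst c) \<noteq> snd (snd c) \<and> fst c \<in> L \<and> snd c \<in> L"
      unfolding Q_def using ij S T by auto
  next
    fix c c' \<sigma> assume a: "c \<in> Q" "c' \<in> Q" "c \<noteq> c'" "\<sigma> \<in> Dset X Y c"
    show "\<sigma> \<notin> Dset X Y c'"
    proof
      assume b: "\<sigma> \<in> Dset X Y c'"
      have inj: "inj_on \<sigma> X" using a(4) unfolding Dset_def gen_diags_def bij_betw_def by auto
      from a b show False unfolding Q_def Dset_def using T inj
        by (auto simp: inj_on_def) blast+
    qed
  qed
  moreover have "real (card S) - 1 \<le> real (card (S - {j}))"
    using card_Diff_singleton_if[of S j] fS S2 by (auto split: if_splits)
  moreover have "real (card T) - 1 \<le> real (card (T - {i}))"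
    using card_Diff_singleton_if[of T i] fS T2 by (auto split: if_splits)
  ultimately have "(real (card S) - 1) * (real (card T) - 1) \<le> real (card Q)"
    using cQ S2 T2 by (simp add: mult_mono)
  moreover have "real (card X) * (real (card X) - 1) > 0" using m2 by simp
  ultimately show ?thesis using PB by (smt (verit) divide_right_mono)
qed


lemma final_arith:
  fixes P q c a1 a2 x1 x2 m :: real
  assumes "P \<le> 1 - c / (m * (m - 1))" "1 - q \<le> P" "m \<ge> 2" "c \<ge> 1" "a1 * a2 \<le> 4 * c"
    "x1 \<le> a1" "x2 \<le> a2" "1 < x1" "1 < x2" "4 * q \<le> x1 * x2 / m^2"
  shows False
proof -
  have mp: "m * (m - 1) > 0" using assms(3) by simp
  have h: "c / (m * (m - 1)) \<le> q" using assms(1,2) by linarith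
  have "c \<le> q * (m * (m - 1))" using h mp by (simp add: divide_le_eq)
  moreover have "x1 * x2 \<le> a1 * a2" using assms(6-9) by (intro mult_mono) auto
  moreover have "4 * q * m^2 \<le> x1 * x2" using assms(10,3) by (simp add: le_divide_eq)
  moreover have "q > 0" using h assms(4) mp by (smt (verit) divide_pos_pos)
  ultimately have "4 * q * m^2 \<le> 4 * (q * (m * (m - 1)))" using assms(5) by linarith
  then have "m^2 \<le> m * (m - 1)" using \<open>q > 0\<close> by simp
  then show False using assms(3) by (simp add: power2_eq_square algebra_simps)
qed

lemma rr_arith: fixes a1 a2 :: real assumes "a1 \<ge> 2" "a2 \<ge> 2"
  shows "1 \<le> a1 * a2 - a1" "a1 * a2 \<le> 4 * (a1 * a2 - a1)"
proof -
  have h: "a1 * a2 \<ge> a1 * 2" using assms by (intro mult_left_mono) auto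
  show "1 \<le> a1 * a2 - a1" using h assms by linarith
  show "a1 * a2 \<le> 4 * (a1 * a2 - a1)" using h assms by (simp add: algebra_simps)
qed

lemma rc_arith: fixes a1 a2 :: real assumes "a1 \<ge> 2" "a2 \<ge> 2"
  shows "1 \<le> (a1 - 1) * (a2 - 1)" "a1 * a2 \<le> 4 * ((a1 - 1) * (a2 - 1))"
proof -
  have "a1 * a2 \<le> (2 * (a1 - 1)) * (2 * (a2 - 1))" using assms by (intro mult_mono) auto
  moreover have "1 * 1 \<le> (a1 - 1) * (a2 - 1)" using assms by (intro mult_mono) auto
  ultimately show "1 \<le> (a1 - 1) * (a2 - 1)" "a1 * a2 \<le> 4 * ((a1 - 1) * (a2 - 1))" by (simp_all add: algebra_simps)
qed

lemma nat_ge2: "(x::real) \<le> real (k::nat) \<Longrightarrow> 1 < x \<Longrightarrow> real k \<ge> 2"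
proof -
  assume "x \<le> real k" "1 < x"
  then have "real k > 1" by linarith
  then have "k > 1" by simp
  then show "real k \<ge> 2" by simp
qed

theorem lemma2p12:
  fixes n :: nat and L :: "(nat \<times> nat) set" and X Y X1 X2 Y1 Y2 :: "nat set"
    and p1 p2 q :: real and l1 l2 :: line
  assumes "L \<subseteq> {..<n} \<times> {..<n}"
    and "restriction n X Y"
    and "q_good L q X Y"
    and "X1 \<subseteq> X" and "X2 \<subseteq> X" and "Y1 \<subseteq> Y" and "Y2 \<subseteq> Y"
    and "card Y1 = card X1" and "card Y2 = card X2"
    and "strong_line L p1 X1 Y1 l1"
    and "strong_line L p2 X2 Y2 l2"
    and "(1 - p1) * real (card X1) > 1"
    and "(1 - p2) * real (card X2) > 1"
    and "(1 - p1) * (1 - p2) * (real (card X1) * real (card X2) / real (card X) ^ 2) \<ge> 4 * q"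
  shows "l1 = l2"
proof (rule ccontr)
  assume ne: "l1 \<noteq> l2"
  note A = assms
  have fin: "finite X" "finite Y" "card Y = card X"
    using A(2) unfolding restriction_def by (auto intro: finite_subset)
  define x1 where "x1 = (1 - p1) * real (card X1)"
  define x2 where "x2 = (1 - p2) * real (card X2)"
  have x1: "1 < x1" and x2: "1 < x2" using A(12,13) unfolding x1_def x2_def by auto
  have Q4: "4 * q \<le> x1 * x2 / real (card X) ^ 2" using A(14) unfolding x1_def x2_def
    by (simp add: algebra_simps)
  have P: "1 - q \<le> prob_good L X Y" using A(3) unfolding q_good_def .
  show False
  proof (cases l1)
    case (Row i1)
    define S1 where "S1 = {j \<in> Y1. (i1, j) \<in> L}"
    have i1: "i1 \<in> X" and s1: "x1 \<le> real (card S1)"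
      using A(10,4,8) unfolding Row S1_def x1_def by auto
    have S1: "S1 \<subseteq> Y" "\<And>b. b \<in> S1 \<Longrightarrow> (i1, b) \<in> L" using A(6) unfolding S1_def by auto
    have a1: "real (card S1) \<ge> 2" by (rule nat_ge2[OF s1 x1])
    show False
    proof (cases l2)
      case (Row i2)
      define S2 where "S2 = {j \<in> Y2. (i2, j) \<in> L}"
      have i2: "i2 \<in> X" and s2: "x2 \<le> real (card S2)"
        using A(11,5,9) unfolding Row S2_def x2_def by auto
      have S2: "S2 \<subseteq> Y" "\<And>b. b \<in> S2 \<Longrightarrow> (i2, b) \<in> L" using A(7) unfolding S2_def by auto
      have a2: "real (card S2) \<ge> 2" by (rule nat_ge2[OF s2 x2])
      have "i1 \<noteq> i2" using ne \<open>l1 = Row i1\<close> Row by auto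
      have m2: "real (card X) \<ge> 2"
      proof -
        have "card {i1, i2} \<le> card X" by (rule card_mono) (use fin i1 i2 in auto)
        then show ?thesis using \<open>i1 \<noteq> i2\<close> by simp
      qed
      from rowrow_bad[OF fin i1 i2 \<open>i1 \<noteq> i2\<close> S1(1) S2(1) S1(2) S2(2)] rr_arith[OF a1 a2]
      show False using final_arith[OF _ P m2 _ _ s1 s2 x1 x2 Q4] by blast
    next
      case (Col j2)
      define T2 where "T2 = {i \<in> X2. (i, j2) \<in> L}"
      have j2: "j2 \<in> Y" and s2: "x2 \<le> real (card T2)"
        using A(11,7) unfolding Col T2_def x2_def by auto
      have T2: "T2 \<subseteq> X" "\<And>a. a \<in> T2 \<Longrightarrow> (a, j2) \<in> L" using A(5) unfolding T2_def by auto
      have a2: "real (card T2) \<ge> 2" by (rule nat_ge2[OF s2 x2])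
      have c2: "card S1 \<ge> 2" "card T2 \<ge> 2" using a1 a2 by linarith+
      have m2: "real (card X) \<ge> 2" using card_mono[OF fin(1) T2(1)] a2 by simp
      from rowcol_bad[OF fin i1 j2 S1 T2 c2] rc_arith[OF a1 a2]
      show False using final_arith[OF _ P m2 _ _ s1 s2 x1 x2 Q4] by blast
    qed
  next
    case (Col j1)
    define T1 where "T1 = {i \<in> X1. (i, j1) \<in> L}"
    have j1: "j1 \<in> Y" and s1: "x1 \<le> real (card T1)"
      using A(10,6) unfolding Col T1_def x1_def by auto
    have T1: "T1 \<subseteq> X" "\<And>a. a \<in> T1 \<Longrightarrow> (a, j1) \<in> L" using A(4) unfolding T1_def by auto
    have a1: "real (card T1) \<ge> 2" by (rule nat_ge2[OF s1 x1])
    have m2: "real (card X) \<ge> 2" using card_mono[OF fin(1) T1(1)] a1 by simp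
    show False
    proof (cases l2)
      case (Col j2)
      define T2 where "T2 = {i \<in> X2. (i, j2) \<in> L}"
      have j2: "j2 \<in> Y" and s2: "x2 \<le> real (card T2)"
        using A(11,7) unfolding Col T2_def x2_def by auto
      have T2: "T2 \<subseteq> X" "\<And>a. a \<in> T2 \<Longrightarrow> (a, j2) \<in> L" using A(5) unfolding T2_def by auto
      have a2: "real (card T2) \<ge> 2" by (rule nat_ge2[OF s2 x2])
      have "j1 \<noteq> j2" using ne \<open>l1 = Col j1\<close> Col by auto
      from colcol_bad[OF fin j1 j2 \<open>j1 \<noteq> j2\<close> T1(1) T2(1) T1(2) T2(2)] rr_arith[OF a1 a2]
      show False using final_arith[OF _ P m2 _ _ s1 s2 x1 x2 Q4] by blast
    next
      case (Row i2)
      define S2 where "S2 = {j \<in> Y2. (i2, j) \<in> L}"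
      have i2: "i2 \<in> X" and s2: "x2 \<le> real (card S2)"
        using A(11,5,9) unfolding Row S2_def x2_def by auto
      have S2: "S2 \<subseteq> Y" "\<And>b. b \<in> S2 \<Longrightarrow> (i2, b) \<in> L" using A(7) unfolding S2_def by auto
      have a2: "real (card S2) \<ge> 2" by (rule nat_ge2[OF s2 x2])
      have c2: "card S2 \<ge> 2" "card T1 \<ge> 2" using a1 a2 by linarith+
      from rowcol_bad[OF fin i2 j1 S2 T1 c2] rc_arith[OF a2 a1]
      have "prob_good L X Y \<le> 1 - ((real (card T1) - 1) * (real (card S2) - 1)) / (real (card X) * (real (card X) - 1))"
        "real (card T1) * real (card S2) \<le> 4 * ((real (card T1) - 1) * (real (card S2) - 1))"
        "1 \<le> (real (card T1) - 1) * (real (card S2) - 1)"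
        by (simp_all add: mult.commute)
      then show False using final_arith[OF _ P m2 _ _ s1 s2 x1 x2 Q4] by blast
    qed
  qed
qed

end
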